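(* Let $(A,a),(B,b),(C,c),(D,d)$ be four flags in $\mathbb{RP}^2$ in generic position. Let $X$ be the triple ratio of $(A,a),(B,b),(C,c)$; let $Y$ be the triple ratio of $(A,a),(C,c),(D,d)$; let $Z$ be the cross-ratio of the four lines $a, AB, AC, AD$ through $A$ (in this order); and let $W$ be the cross-ratio of the four lines $c, CD, CA, CB$ through $C$ (in this order). Then the convex quadrangle $ABCD$ is inscribed into the convex quadrangle $abcd$ if and only if $X,Y,Z,W$ are all positive.
   Context: A flag in $\mathbb{RP}^2$ is a pair $(A,a)$ of a point $A$ and a line $a\ni A$. The triple ratio of flags $(A,a),(B,b),(C,c)$ is $\frac{f_a(\tilde B)f_b(\tilde C)f_c(\tilde A)}{f_a(\tilde C)f_b(\tilde A)f_c(\tilde B)}$, where $f_a,f_b,f_c\in(\mathbb R^3)^*$ have kernels the planes corresponding to $a,b,c$ and $\tilde A,\tilde B,\tilde C$ are nonzero lifts of $A,B,C$ to $\mathbb R^3$. The cross-ratio of four points $x_1,x_2,x_3,x_4$ on a projective line (or of four concurrent lines, viewed as points of the projective line of lines through their common point) is $\frac{(x_1-x_2)(x_3-x_4)}{(x_1-x_4)(x_2-x_3)}$ in any affine coordinate. "The convex quadrangle $ABCD$ is inscribed into the convex quadrangle $abcd$" means: in some affine chart $\mathbb R^2\subset\mathbb{RP}^2$, the lines $a,b,c,d$ bound a compact convex quadrilateral whose sides, in cyclic order, lie on $a,b,c,d$, and $A,B,C,D$ lie in the relative interiors of the sides on $a,b,c,d$ respectively (so $ABCD$ is a convex quadrilateral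 with vertices in this cyclic order). *)

theory Defs
  imports "HOL-Analysis.Analysis"
begin

(* A point of RP^2 is represented by a nonzero lift in real^3;
   a line is represented by a nonzero covector f in real^3 acting by f(x) = f \<bullet> x,
   the line being the projectivised kernel. *)

definition is_flag :: "real^3 \<Rightarrow> real^3 \<Rightarrow> bool" where
  "is_flag P l \<longleftrightarrow> P \<noteq> 0 \<and> l \<noteq> 0 \<and> l \<bullet> P = 0"

definition line_through :: "real^3 \<Rightarrow> real^3 \<Rightarrow> real^3" where
  "line_through P Q = cross3 P Q"

definition meet :: "real^3 \<Rightarrow> real^3 \<Rightarrow> real^3" where
  "meet l m = cross3 l m"

definition triple_ratio ::
  "real^3 \<Rightarrow> real^3 \<Rightarrow> real^3 \<Rightarrow> real^3 \<Rightarrow> real^3 \<Rightarrow> real^3 \<Rightarrow> real" where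
  "triple_ratio A a B b C c =
     ((a \<bullet> B) * (b \<bullet> C) * (c \<bullet> A)) / ((a \<bullet> C) * (b \<bullet> A) * (c \<bullet> B))"

(* Lines through the point Q form a projective line, namely the projectivisation of
   the 2-dimensional space of covectors annihilating Q.  On that space
   pencil_bracket Q is a nonzero alternating bilinear form (an "affine coordinate
   determinant"), so the cross-ratio below equals
   (x1-x2)(x3-x4)/((x1-x4)(x2-x3)) in any affine coordinate on the pencil. *)
definition pencil_bracket :: "real^3 \<Rightarrow> real^3 \<Rightarrow> real^3 \<Rightarrow> real" where
  "pencil_bracket Q f g = Q \<bullet> cross3 f g"

definition pencil_cross_ratio ::
  "real^3 \<Rightarrow> real^3 \<Rightarrow> real^3 \<Rightarrow> real^3 \<Rightarrow> real^3 \<Rightarrow> real" where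
  "pencil_cross_ratio Q l1 l2 l3 l4 =
     (pencil_bracket Q l1 l2 * pencil_bracket Q l3 l4) /
     (pencil_bracket Q l1 l4 * pencil_bracket Q l2 l3)"

definition generic_flags4 :: "((real^3) \<times> (real^3)) list \<Rightarrow> bool" where
  "generic_flags4 Fs \<longleftrightarrow> length Fs = 4 \<and>
     (\<forall>i<4. is_flag (fst (Fs!i)) (snd (Fs!i))) \<and>
     (\<forall>i<4. \<forall>j<4. i \<noteq> j \<longrightarrow> snd (Fs!j) \<bullet> fst (Fs!i) \<noteq> 0) \<and>
     (\<forall>i<4. \<forall>j<4. \<forall>k<4. i \<noteq> j \<and> j \<noteq> k \<and> i \<noteq> k \<longrightarrow>
        fst (Fs!i) \<bullet> cross3 (fst (Fs!j)) (fst (Fs!k)) \<noteq> 0 \<and>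
        snd (Fs!i) \<bullet> cross3 (snd (Fs!j)) (snd (Fs!k)) \<noteq> 0)"

(* The affine chart of RP^2 with line at infinity ker h is identified with the affine
   plane {x. h \<bullet> x = 1} in real^3; a point P not at infinity is sent to chart_pt h P. *)
definition chart_pt :: "real^3 \<Rightarrow> real^3 \<Rightarrow> real^3" where
  "chart_pt h P = (1 / (h \<bullet> P)) *\<^sub>R P"

definition convex_quadrilateral :: "real^3 \<Rightarrow> real^3 \<Rightarrow> real^3 \<Rightarrow> real^3 \<Rightarrow> bool" where
  "convex_quadrilateral W1 W2 W3 W4 \<longleftrightarrow>
     \<not> collinear {W1, W2, W3} \<and> open_segment W1 W3 \<inter> open_segment W2 W4 \<noteq> {}"

(* "The convex quadrangle ABCD is inscribed into the convex quadrangle abcd":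
   in some affine chart, the lines a,b,c,d bound a compact convex quadrilateral whose
   sides, in cyclic order, lie on a,b,c,d (vertices d\<inter>a, a\<inter>b, b\<inter>c, c\<inter>d), and
   A,B,C,D lie in the relative interiors of the sides on a,b,c,d respectively. *)
definition inscribed ::
  "real^3 \<Rightarrow> real^3 \<Rightarrow> real^3 \<Rightarrow> real^3 \<Rightarrow> real^3 \<Rightarrow> real^3 \<Rightarrow> real^3 \<Rightarrow> real^3 \<Rightarrow> bool" where
  "inscribed A B C D a b c d \<longleftrightarrow>
     (\<exists>h::real^3. h \<noteq> 0 \<and>
        (let V1 = meet d a; V2 = meet a b; V3 = meet b c; V4 = meet c d in
          V1 \<noteq> 0 \<and> V2 \<noteq> 0 \<and> V3 \<noteq> 0 \<and> V4 \<noteq> 0 \<and>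
          h \<bullet> V1 \<noteq> 0 \<and> h \<bullet> V2 \<noteq> 0 \<and> h \<bullet> V3 \<noteq> 0 \<and> h \<bullet> V4 \<noteq> 0 \<and>
          h \<bullet> A \<noteq> 0 \<and> h \<bullet> B \<noteq> 0 \<and> h \<bullet> C \<noteq> 0 \<and> h \<bullet> D \<noteq> 0 \<and>
          convex_quadrilateral (chart_pt h V1) (chart_pt h V2) (chart_pt h V3) (chart_pt h V4) \<and>
          chart_pt h A \<in> open_segment (chart_pt h V1) (chart_pt h V2) \<and>
          chart_pt h B \<in> open_segment (chart_pt h V2) (chart_pt h V3) \<and>
          chart_pt h C \<in> open_segment (chart_pt h V3) (chart_pt h V4) \<and>
          chart_pt h D \<in> open_segment (chart_pt h V4) (chart_pt h V1)))"

end

theory Submission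
  imports Defs
begin



lemma expand3: "(x \<bullet> cross3 y z) *\<^sub>R w = (x \<bullet> w) *\<^sub>R cross3 y z + (y \<bullet> w) *\<^sub>R cross3 z x + (z \<bullet> w) *\<^sub>R cross3 x y"
  unfolding cross3_def inner_vec_def sum_3 vec_eq_iff forall_3 vector_def by (simp; algebra)

lemma dep4: "(y \<bullet> cross3 z t) *\<^sub>R x - (x \<bullet> cross3 z t) *\<^sub>R y + (x \<bullet> cross3 y t) *\<^sub>R z - (x \<bullet> cross3 y z) *\<^sub>R t = 0"
  unfolding cross3_def inner_vec_def sum_3 vec_eq_iff forall_3 vector_def by (simp; algebra)

lemma cyc: "x \<bullet> cross3 y z = y \<bullet> cross3 z x" "x \<bullet> cross3 y z = z \<bullet> cross3 x y"
  "x \<bullet> cross3 y z = - (y \<bullet> cross3 x z)" 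
  unfolding cross3_def inner_vec_def sum_3 vec_eq_iff forall_3 vector_def by (simp; algebra)+

lemma crosscross: "cross3 x (cross3 y z) = (x \<bullet> z) *\<^sub>R y - (x \<bullet> y) *\<^sub>R z"
  unfolding cross3_def inner_vec_def sum_3 vec_eq_iff forall_3 vector_def by (simp; algebra)

lemma crosscross2: "cross3 (cross3 x y) (cross3 x z) = (x \<bullet> cross3 y z) *\<^sub>R x"
  unfolding cross3_def inner_vec_def sum_3 vec_eq_iff forall_3 vector_def by (simp; algebra)

lemma tripV: fixes a b c d :: "real^3" shows
  "cross3 d a \<bullet> cross3 (cross3 a b) (cross3 b c) = (a \<bullet> cross3 b d) * (a \<bullet> cross3 b c)"
  "cross3 d a \<bullet> cross3 (cross3 a b) (cross3 c d) = (a \<bullet> cross3 b d) * (a \<bullet> cross3 c d)"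
  "cross3 d a \<bullet> cross3 (cross3 b c) (cross3 c d) = (b \<bullet> cross3 c d) * (a \<bullet> cross3 c d)"
  "cross3 a b \<bullet> cross3 (cross3 b c) (cross3 c d) = (a \<bullet> cross3 b c) * (b \<bullet> cross3 c d)"
  unfolding cross3_def inner_vec_def sum_3 vec_eq_iff forall_3 vector_def by (simp; algebra)+

lemma collinear_det: assumes "collinear {x, y, z::real^3}" shows "x \<bullet> cross3 y z = 0"
proof -
  from assms obtain u where u: "\<forall>v\<in>{x,y,z}. \<forall>w\<in>{x,y,z}. \<exists>c. v - w = c *\<^sub>R u"
    unfolding collinear_def by blast
  then obtain c1 c2 where "y - x = c1 *\<^sub>R u" "z - x = c2 *\<^sub>R u" by blast
  then have "y = x + c1 *\<^sub>R u" "z = x + c2 *\<^sub>R u" by (simp_all add: algebra_simps)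
  then show ?thesis
    by (simp add: cross_add_left cross_add_right cross_mult_left cross_mult_right inner_add_right dot_cross_self)
qed



lemma sgn1: "0 < x*y \<Longrightarrow> 0 < y \<Longrightarrow> 0 < (x::real)"
  by (simp add: zero_less_mult_iff)

lemma sgn2: "0 < x*y \<Longrightarrow> y < 0 \<Longrightarrow> x < (0::real)"
  by (simp add: zero_less_mult_iff)

lemma pos_div_iff: "(b::real) \<noteq> 0 \<Longrightarrow> (a / b > 0) = (a * b > 0)"
  by (simp add: zero_less_divide_iff zero_less_mult_iff)

lemma seg_fwd:
  assumes "h \<bullet> V \<noteq> 0" "h \<bullet> W \<noteq> 0" "h \<bullet> P \<noteq> 0"
    "chart_pt h P \<in> open_segment (chart_pt h V) (chart_pt h W)"
  shows "\<exists>t. 0 < t \<and> t < 1 \<and> (\<forall>l. l \<bullet> P = (h \<bullet> P) * ((1-t)*(l \<bullet> V)/(h \<bullet> V) + t*(l \<bullet> W)/(h \<bullet> W)))"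
proof -
  obtain t where t: "0 < t" "t < 1" "chart_pt h P = (1 - t) *\<^sub>R chart_pt h V + t *\<^sub>R chart_pt h W"
    using assms(4) unfolding in_segment by blast
  have "l \<bullet> P = (h \<bullet> P) * ((1-t)*(l \<bullet> V)/(h \<bullet> V) + t*(l \<bullet> W)/(h \<bullet> W))" for l
  proof -
    have "l \<bullet> chart_pt h P = l \<bullet> ((1 - t) *\<^sub>R chart_pt h V + t *\<^sub>R chart_pt h W)" using t(3) by simp
    then have "(l \<bullet> P)/(h \<bullet> P) = (1-t)*(l \<bullet> V)/(h \<bullet> V) + t*(l \<bullet> W)/(h \<bullet> W)"
      unfolding chart_pt_def by (simp add: inner_add_right)
    then show ?thesis using assms(3) by (simp add: field_simps)
  qed
  then show ?thesis using t by blast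
qed

lemma seg_bwd:
  assumes eq: "\<sigma> *\<^sub>R P = x *\<^sub>R V + y *\<^sub>R W" and nz: "\<sigma> \<noteq> 0" "h \<bullet> V \<noteq> 0" "h \<bullet> W \<noteq> 0" "h \<bullet> P \<noteq> 0"
    and pos: "(x * (h \<bullet> V)) * (y * (h \<bullet> W)) > 0" and ne: "chart_pt h V \<noteq> chart_pt h W"
  shows "chart_pt h P \<in> open_segment (chart_pt h V) (chart_pt h W)"
proof -
  define S where "S = x * (h \<bullet> V) + y * (h \<bullet> W)"
  have hP: "\<sigma> * (h \<bullet> P) = S" unfolding S_def using arg_cong[OF eq, of "\<lambda>v. h \<bullet> v"]
    by (simp add: inner_add_right)
  have SP: "S \<noteq> 0" by (metis hP mult_eq_0_iff nz(1) nz(4))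
  define t where "t = y * (h \<bullet> W) / S"
  have t1: "1 - t = x * (h \<bullet> V) / S" unfolding t_def S_def using SP unfolding S_def by (simp add: field_simps)
  have tpos: "0 < t" "t < 1"
  proof -
    define X where "X = x * (h \<bullet> V)"
    define Y where "Y = y * (h \<bullet> W)"
    have XY: "X * Y > 0" using pos X_def Y_def by simp
    have "S * Y = X * Y + Y^2" "S * X = X^2 + X * Y" unfolding S_def X_def Y_def by (simp_all add: power2_eq_square algebra_simps)
    moreover have "Y^2 \<ge> 0" "X^2 \<ge> 0" by simp_all
    ultimately have "S * Y > 0" "S * X > 0" using XY by linarith+
    then have "Y / S > 0" "X / S > 0" using pos_div_iff[OF SP] by (simp_all add: mult.commute)
    then show "0 < t" "t < 1" using t1 unfolding t_def X_def Y_def by simp_all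
  qed
  have P: "P = (x / \<sigma>) *\<^sub>R V + (y / \<sigma>) *\<^sub>R W"
    using arg_cong[OF eq, of "\<lambda>v. (1/\<sigma>) *\<^sub>R v"] nz by (simp add: scaleR_add_right)
  have c1: "x / (\<sigma> * (h \<bullet> P)) = (1-t)/(h \<bullet> V)" unfolding t1 hP using nz SP by (simp add: field_simps)
  have c2: "y / (\<sigma> * (h \<bullet> P)) = t/(h \<bullet> W)" unfolding t_def hP using nz SP by (simp add: field_simps)
  have "chart_pt h P = (1 - t) *\<^sub>R chart_pt h V + t *\<^sub>R chart_pt h W"
  proof -
    have "chart_pt h P = (x / (\<sigma> * (h \<bullet> P))) *\<^sub>R V + (y / (\<sigma> * (h \<bullet> P))) *\<^sub>R W"
      unfolding chart_pt_def using arg_cong[OF P, of "\<lambda>v. (1/(h \<bullet> P)) *\<^sub>R v"] by (simp add: scaleR_add_right mult.commute)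
    also have "\<dots> = ((1-t) / (h \<bullet> V)) *\<^sub>R V + (t / (h \<bullet> W)) *\<^sub>R W"
      using c1 c2 by simp
    also have "\<dots> = (1 - t) *\<^sub>R chart_pt h V + t *\<^sub>R chart_pt h W"
      unfolding chart_pt_def by simp
    finally show ?thesis .
  qed
  then show ?thesis unfolding in_segment using tpos ne by blast
qed

lemma convex_fwd:
  fixes w1 w2 w3 w4 :: "real^3"
  assumes "open_segment w1 w3 \<inter> open_segment w2 w4 \<noteq> {}" "w1 \<bullet> cross3 w2 w3 \<noteq> 0"
  shows "(w1 \<bullet> cross3 w2 w3) * (w4 \<bullet> cross3 w1 w2) > 0"
        "(w2 \<bullet> cross3 w3 w4) * (w4 \<bullet> cross3 w1 w2) > 0"
        "(w1 \<bullet> cross3 w2 w3) * (w3 \<bullet> cross3 w4 w1) > 0"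
proof -
  obtain Ov where o1: "Ov \<in> open_segment w1 w3" and o2: "Ov \<in> open_segment w2 w4" using assms(1) by blast
  obtain \<sigma> where s: "0 < \<sigma>" "\<sigma> < 1" "Ov = (1 - \<sigma>) *\<^sub>R w1 + \<sigma> *\<^sub>R w3"
    using o1 unfolding in_segment by blast
  obtain \<mu> where m: "0 < \<mu>" "\<mu> < 1" "Ov = (1 - \<mu>) *\<^sub>R w2 + \<mu> *\<^sub>R w4"
    using o2 unfolding in_segment by blast
  have eq: "(1 - \<sigma>) *\<^sub>R w1 + \<sigma> *\<^sub>R w3 = (1 - \<mu>) *\<^sub>R w2 + \<mu> *\<^sub>R w4" using s(3) m(3) by simp
  define D123 where "D123 = w1 \<bullet> cross3 w2 w3"
  define D234 where "D234 = w2 \<bullet> cross3 w3 w4"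
  define D341 where "D341 = w3 \<bullet> cross3 w4 w1"
  define D412 where "D412 = w4 \<bullet> cross3 w1 w2"
  have k1: "w3 \<bullet> cross3 w1 w2 = D123" unfolding D123_def by (rule cyc(2)[symmetric])
  have k2: "w1 \<bullet> cross3 w2 w4 = D412" unfolding D412_def by (rule cyc(2))
  have k3: "w3 \<bullet> cross3 w2 w4 = - D234" unfolding D234_def by (rule cyc(3))
  have k4: "w2 \<bullet> cross3 w1 w3 = - D123" unfolding D123_def by (rule cyc(3))
  have k5: "w4 \<bullet> cross3 w1 w3 = D341" unfolding D341_def by (rule cyc(2))
  have "((1 - \<sigma>) *\<^sub>R w1 + \<sigma> *\<^sub>R w3) \<bullet> cross3 w1 w2 = ((1 - \<mu>) *\<^sub>R w2 + \<mu> *\<^sub>R w4) \<bullet> cross3 w1 w2"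
    using eq by simp
  then have E1: "\<sigma> * D123 = \<mu> * D412"
    unfolding inner_add_left inner_scaleR_left k1 dot_cross_self D412_def[symmetric] by simp
  have "((1 - \<sigma>) *\<^sub>R w1 + \<sigma> *\<^sub>R w3) \<bullet> cross3 w2 w4 = ((1 - \<mu>) *\<^sub>R w2 + \<mu> *\<^sub>R w4) \<bullet> cross3 w2 w4"
    using eq by simp
  then have E2: "(1 - \<sigma>) * D412 = \<sigma> * D234"
    unfolding inner_add_left inner_scaleR_left k2 k3 dot_cross_self by simp
  have "((1 - \<sigma>) *\<^sub>R w1 + \<sigma> *\<^sub>R w3) \<bullet> cross3 w1 w3 = ((1 - \<mu>) *\<^sub>R w2 + \<mu> *\<^sub>R w4) \<bullet> cross3 w1 w3"
    using eq by simp
  then have E3: "(1 - \<mu>) * D123 = \<mu> * D341"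
    unfolding inner_add_left inner_scaleR_left k4 k5 dot_cross_self by simp
  have nz: "D123 \<noteq> 0" using assms(2) D123_def by simp
  have sm: "0 < \<sigma>" "\<sigma> < 1" "0 < \<mu>" "\<mu> < 1" using s m by auto
  have "(D123 * D412) * (\<mu> * \<sigma>) > 0"
  proof -
    have "(D123 * D412) * (\<mu> * \<sigma>) = (\<sigma> * D123) * (\<mu> * D412)" by (simp add: algebra_simps)
    also have "\<dots> = (\<sigma> * D123)^2" by (simp only: E1[symmetric] power2_eq_square)
    finally have "(D123 * D412) * (\<mu> * \<sigma>) = (\<sigma> * D123)^2" .
    then show ?thesis using nz sm by simp
  qed
  then have P1: "D123 * D412 > 0" by (rule sgn1) (use sm in simp)
  have "(D234 * D412) * (\<sigma> * (1-\<sigma>)) > 0"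
  proof -
    have "(D234 * D412) * (\<sigma> * (1-\<sigma>)) = (\<sigma> * D234) * ((1-\<sigma>) * D412)" by (simp add: algebra_simps)
    also have "\<dots> = ((1-\<sigma>) * D412)^2" by (simp only: E2[symmetric] power2_eq_square)
    finally have "(D234 * D412) * (\<sigma> * (1-\<sigma>)) = ((1-\<sigma>) * D412)^2" .
    moreover have "D412 \<noteq> 0" using P1 by auto
    ultimately show ?thesis using sm by (simp del: power2_eq_square)
  qed
  then have P2: "D234 * D412 > 0" by (rule sgn1) (use sm in simp)
  have "(D123 * D341) * (\<mu> * (1-\<mu>)) > 0"
  proof -
    have "(D123 * D341) * (\<mu> * (1-\<mu>)) = ((1-\<mu>) * D123) * (\<mu> * D341)" by (simp add: algebra_simps)
    also have "\<dots> = ((1-\<mu>) * D123)^2" by (simp only: E3[symmetric] power2_eq_square)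
    finally have "(D123 * D341) * (\<mu> * (1-\<mu>)) = ((1-\<mu>) * D123)^2" .
    then show ?thesis using sm nz by simp
  qed
  then have P3: "D123 * D341 > 0" by (rule sgn1) (use sm in simp)
  show "(w1 \<bullet> cross3 w2 w3) * (w4 \<bullet> cross3 w1 w2) > 0"
        "(w2 \<bullet> cross3 w3 w4) * (w4 \<bullet> cross3 w1 w2) > 0"
        "(w1 \<bullet> cross3 w2 w3) * (w3 \<bullet> cross3 w4 w1) > 0"
    using P1 P2 P3 unfolding D123_def D234_def D341_def D412_def by simp_all
qed





lemma in_open_seg:
  assumes "a \<noteq> b" "S \<noteq> 0" "S = x + y" "x * k > 0" "y * k > 0" "(k::real) \<noteq> 0"
  shows "(1/S) *\<^sub>R (x *\<^sub>R a + y *\<^sub>R b) \<in> open_segment a b"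
proof -
  have Sk: "S * k > 0" using assms by (simp add: distrib_right)
  have u: "0 < y / S" "0 < x / S"
    using assms(4,5) Sk by (simp_all add: zero_less_divide_iff zero_less_mult_iff) (smt (verit) mult_neg_neg mult_pos_pos)+
  have "1 - y / S = x / S" using assms(2,3) by (simp add: field_simps)
  then have "(1/S) *\<^sub>R (x *\<^sub>R a + y *\<^sub>R b) = (1 - y/S) *\<^sub>R a + (y/S) *\<^sub>R b"
    by (simp add: scaleR_add_right)
  moreover have "y / S < 1" using \<open>1 - y / S = x / S\<close> u by linarith
  ultimately show ?thesis unfolding in_segment using assms(1) u by blast
qed

lemma convex_bwd:
  fixes w1 w2 w3 w4 h :: "real^3" and k :: real
  assumes h: "h \<bullet> w1 = 1" "h \<bullet> w2 = 1" "h \<bullet> w3 = 1" "h \<bullet> w4 = 1"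
    and k: "k \<noteq> 0" "(w1 \<bullet> cross3 w2 w3) * k > 0" "(w2 \<bullet> cross3 w3 w4) * k > 0"
       "(w3 \<bullet> cross3 w4 w1) * k > 0" "(w4 \<bullet> cross3 w1 w2) * k > 0"
  shows "convex_quadrilateral w1 w2 w3 w4"
proof -
  define D123 where "D123 = w1 \<bullet> cross3 w2 w3"
  define D234 where "D234 = w2 \<bullet> cross3 w3 w4"
  define D341 where "D341 = w3 \<bullet> cross3 w4 w1"
  define D412 where "D412 = w4 \<bullet> cross3 w1 w2"
  have kk: "D123 * k > 0" "D234 * k > 0" "D341 * k > 0" "D412 * k > 0"
    using k unfolding D123_def D234_def D341_def D412_def by simp_all
  have nc: "\<not> collinear {w1, w2, w3}"
    using collinear_det[of w1 w2 w3] kk(1) unfolding D123_def by auto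
  have c1: "w1 \<bullet> cross3 w3 w4 = D341" unfolding D341_def by (rule cyc(1))
  have c2: "w1 \<bullet> cross3 w2 w4 = D412" unfolding D412_def by (rule cyc(2))
  have dep: "D234 *\<^sub>R w1 - D341 *\<^sub>R w2 + D412 *\<^sub>R w3 - D123 *\<^sub>R w4 = 0"
    using dep4[of w2 w3 w4 w1] unfolding c1 c2 D234_def[symmetric] D123_def[symmetric] .
  then have eqv: "D234 *\<^sub>R w1 + D412 *\<^sub>R w3 = D341 *\<^sub>R w2 + D123 *\<^sub>R w4"
    by (simp add: algebra_simps)
  then have "h \<bullet> (D234 *\<^sub>R w1 + D412 *\<^sub>R w3) = h \<bullet> (D341 *\<^sub>R w2 + D123 *\<^sub>R w4)" by simp
  then have hs: "D234 + D412 = D341 + D123" using h by (simp add: inner_add_right)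
  define S where "S = D234 + D412"
  have Sk: "S * k > 0" unfolding S_def using kk by (simp add: distrib_right)
  then have S0: "S \<noteq> 0" by auto
  have ne13: "w1 \<noteq> w3"
  proof
    assume "w1 = w3" then have "D123 = 0" unfolding D123_def by (simp add: dot_cross_self)
    then show False using kk by simp
  qed
  have ne24: "w2 \<noteq> w4"
  proof
    assume "w2 = w4" then have "D412 = 0" unfolding D412_def by (simp add: dot_cross_self)
    then show False using kk by simp
  qed
  have m1: "(1/S) *\<^sub>R (D234 *\<^sub>R w1 + D412 *\<^sub>R w3) \<in> open_segment w1 w3"
    by (rule in_open_seg[OF ne13 S0 S_def kk(2) kk(4) k(1)])
  have m2: "(1/S) *\<^sub>R (D341 *\<^sub>R w2 + D123 *\<^sub>R w4) \<in> open_segment w2 w4"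
    by (rule in_open_seg[OF ne24 S0 _ kk(3) kk(1) k(1)]) (use hs S_def in simp)
  show ?thesis unfolding convex_quadrilateral_def using nc m1 m2 eqv by auto
qed

lemma ulemma:
  fixes u1 u2 u3 u4 :: real
  assumes "u1 \<noteq> 0" "u2 \<noteq> 0" "u3 \<noteq> 0" "u4 \<noteq> 0" "1+u1 \<noteq> 0" "1+u3 \<noteq> 0"
    "(1+u1) + u1*u4*(1+u3) \<noteq> 0" "(1+u3) + u2*u3*(1+u1) \<noteq> 0"
  shows "(u2*u3*(1+u1)/(1+u3) > 0 \<and> u1*u4*(1+u3)/(1+u1) > 0 \<and>
          u2*((1+u1) + u1*u4*(1+u3))/((1+u3) + u2*u3*(1+u1)) > 0 \<and>
          u4*((1+u3) + u2*u3*(1+u1))/((1+u1) + u1*u4*(1+u3)) > 0)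
     \<longleftrightarrow> (u1 > 0 \<and> u2 > 0 \<and> u3 > 0 \<and> u4 > 0)"
proof
  assume "u1 > 0 \<and> u2 > 0 \<and> u3 > 0 \<and> u4 > 0"
  then show "u2*u3*(1+u1)/(1+u3) > 0 \<and> u1*u4*(1+u3)/(1+u1) > 0 \<and>
          u2*((1+u1) + u1*u4*(1+u3))/((1+u3) + u2*u3*(1+u1)) > 0 \<and>
          u4*((1+u3) + u2*u3*(1+u1))/((1+u1) + u1*u4*(1+u3)) > 0"
    by (simp add: add_pos_pos)
next
  define e1 where "e1 = 1+u1"
  define e3 where "e3 = 1+u3"
  define Z1 where "Z1 = e1 + u1*u4*e3"
  define Z2 where "Z2 = e3 + u2*u3*e1"
  assume H: "u2*u3*(1+u1)/(1+u3) > 0 \<and> u1*u4*(1+u3)/(1+u1) > 0 \<and>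
          u2*((1+u1) + u1*u4*(1+u3))/((1+u3) + u2*u3*(1+u1)) > 0 \<and>
          u4*((1+u3) + u2*u3*(1+u1))/((1+u1) + u1*u4*(1+u3)) > 0"
  have ne: "e1 \<noteq> 0" "e3 \<noteq> 0" "Z1 \<noteq> 0" "Z2 \<noteq> 0" using assms by (auto simp: e1_def e3_def Z1_def Z2_def)
  have H': "u2*u3*e1/e3 > 0" "u1*u4*e3/e1 > 0" "u2*Z1/Z2 > 0" "u4*Z2/Z1 > 0"
    using H by (simp_all add: e1_def e3_def Z1_def Z2_def)
  have X: "(u2*u3)*(e1*e3) > 0" using H'(1) ne pos_div_iff[of e3 "u2*u3*e1"] by (simp add: ac_simps)
  have Y: "(u1*u4)*(e1*e3) > 0" using H'(2) ne pos_div_iff[of e1 "u1*u4*e3"] by (simp add: ac_simps)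
  have Z: "u2*(Z1*Z2) > 0" using H'(3) ne pos_div_iff[of Z2 "u2*Z1"] by (simp add: ac_simps)
  have W: "u4*(Z1*Z2) > 0" using H'(4) ne pos_div_iff[of Z1 "u4*Z2"] by (simp add: ac_simps)
  have z1: "Z1*e1 = e1^2 + (u1*u4)*(e1*e3)" by (simp add: Z1_def power2_eq_square algebra_simps)
  have z2: "Z2*e3 = e3^2 + (u2*u3)*(e1*e3)" by (simp add: Z2_def power2_eq_square algebra_simps)
  have e2: "e1^2 > 0" "e3^2 > 0" using ne by auto
  have zz: "(Z1*Z2)*(e1*e3) = (Z1*e1)*(Z2*e3)" by (simp add: ac_simps)
  show "u1 > 0 \<and> u2 > 0 \<and> u3 > 0 \<and> u4 > 0"
  proof (cases "e1*e3 > 0")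
    case True
    have "u2*u3 > 0" "u1*u4 > 0" using X Y True sgn1 by blast+
    with True have "(u1*u4)*(e1*e3) > 0" "(u2*u3)*(e1*e3) > 0" by simp_all
    then have "Z1*e1 > 0" "Z2*e3 > 0" using z1 z2 e2 by linarith+
    then have "(Z1*Z2)*(e1*e3) > 0" unfolding zz by (rule mult_pos_pos)
    then have "Z1*Z2 > 0" using True sgn1 by blast
    then have "u2 > 0" "u4 > 0" using Z W sgn1 by blast+
    then show ?thesis using \<open>u2*u3 > 0\<close> \<open>u1*u4 > 0\<close> by (simp_all add: zero_less_mult_iff)
  next
    case False
    then have F: "e1*e3 < 0" using ne by (metis linorder_neqE_linordered_idom mult_eq_0_iff)
    have "u2*u3 < 0" "u1*u4 < 0" using X Y F sgn2 by blast+
    with F have "(u1*u4)*(e1*e3) > 0" "(u2*u3)*(e1*e3) > 0" by (simp_all add: zero_less_mult_iff)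
    then have "Z1*e1 > 0" "Z2*e3 > 0" using z1 z2 e2 by linarith+
    then have "(Z1*Z2)*(e1*e3) > 0" unfolding zz by (rule mult_pos_pos)
    then have "Z1*Z2 < 0" using F sgn2 by blast
    then have "u2 < 0" "u4 < 0" using Z W sgn2 by blast+
    then have "u3 > 0" "u1 > 0" using \<open>u2*u3 < 0\<close> \<open>u1*u4 < 0\<close> by (simp_all add: mult_less_0_iff)
    then have "e1*e3 > 0" by (simp add: e1_def e3_def)
    with F show ?thesis by simp
  qed
qed

lemma core:
  fixes A1 A2 B1 B2 C1 C2 D1 D2 p q r s cA aC tABC tACD :: real
  assumes nz: "A1 \<noteq> 0" "A2 \<noteq> 0" "B1 \<noteq> 0" "B2 \<noteq> 0" "C1 \<noteq> 0" "C2 \<noteq> 0" "D1 \<noteq> 0" "D2 \<noteq> 0"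
    "p \<noteq> 0" "q \<noteq> 0" "r \<noteq> 0" "s \<noteq> 0" "cA \<noteq> 0" "aC \<noteq> 0" "tABC \<noteq> 0" "tACD \<noteq> 0"
  and e1: "s*cA = A1*r + A2*p" and e2: "q*aC = C1*p + C2*r"
  and e3: "s*p*q*tABC = A1*B1*C1* s*p + A1*B1*C2* s*r + A1*B2*C2*q*r + A2*B2*C2*p*q"
  and e4: "s*q*r*tACD = A1*C1*D1*q*r + A2*C1*D1*p*q + A2*C1*D2* s*p + A2*C2*D2* s*r"
  shows "(B2*C2*cA/(aC*A1*B1) > 0 \<and> aC*D2*A2/(D1*cA*C1) > 0 \<and> B2*tACD/(D1*tABC) > 0 \<and> D2*tABC/(B1*tACD) > 0)
     \<longleftrightarrow> (A2*p/(A1*r) > 0 \<and> B2*q/(B1* s) > 0 \<and> C2*r/(C1*p) > 0 \<and> D2* s/(D1*q) > 0)"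
proof -
  define u1 where "u1 = A2*p/(A1*r)"
  define u2 where "u2 = B2*q/(B1* s)"
  define u3 where "u3 = C2*r/(C1*p)"
  define u4 where "u4 = D2* s/(D1*q)"
  have cA: "cA = (A1*r + A2*p)/s" using e1 nz by (simp add: field_simps)
  have aC: "aC = (C1*p + C2*r)/q" using e2 nz by (simp add: field_simps)
  have tABC: "tABC = (A1*B1*C1* s*p + A1*B1*C2* s*r + A1*B2*C2*q*r + A2*B2*C2*p*q)/(s*p*q)" using e3 nz by (simp add: field_simps)
  have tACD: "tACD = (A1*C1*D1*q*r + A2*C1*D1*p*q + A2*C1*D2* s*p + A2*C2*D2* s*r)/(s*q*r)" using e4 nz by (simp add: field_simps)
  have f1: "1+u1 = s*cA/(A1*r)" using nz unfolding u1_def cA by (simp add: field_simps)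
  have f3: "1+u3 = q*aC/(C1*p)" using nz unfolding u3_def aC by (simp add: field_simps)
  have g1: "(1+u1) + u1*u4*(1+u3) = s*q*r*tACD/(A1*C1*D1*q*r)" using nz unfolding u1_def u3_def u4_def tACD by (simp add: field_simps)
  have g2: "(1+u3) + u2*u3*(1+u1) = s*p*q*tABC/(A1*B1*C1* s*p)" using nz unfolding u1_def u2_def u3_def tABC by (simp add: field_simps)
  have X: "B2*C2*cA/(aC*A1*B1) = u2*u3*(1+u1)/(1+u3)" unfolding f1 f3 using nz unfolding u2_def u3_def by (simp add: field_simps)
  have Y: "aC*D2*A2/(D1*cA*C1) = u1*u4*(1+u3)/(1+u1)" unfolding f1 f3 using nz unfolding u1_def u4_def by (simp add: field_simps)
  have Z: "B2*tACD/(D1*tABC) = u2*((1+u1) + u1*u4*(1+u3))/((1+u3) + u2*u3*(1+u1))" unfolding g1 g2 using nz unfolding u2_def by (simp add: field_simps)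
  have W: "D2*tABC/(B1*tACD) = u4*((1+u3) + u2*u3*(1+u1))/((1+u1) + u1*u4*(1+u3))" unfolding g1 g2 using nz unfolding u4_def by (simp add: field_simps)
  have "(u2*u3*(1+u1)/(1+u3) > 0 \<and> u1*u4*(1+u3)/(1+u1) > 0 \<and>
          u2*((1+u1) + u1*u4*(1+u3))/((1+u3) + u2*u3*(1+u1)) > 0 \<and>
          u4*((1+u3) + u2*u3*(1+u1))/((1+u1) + u1*u4*(1+u3)) > 0)
     \<longleftrightarrow> (u1 > 0 \<and> u2 > 0 \<and> u3 > 0 \<and> u4 > 0)"
    apply (rule ulemma)
    unfolding g1 g2 unfolding f1 f3 using nz by (simp_all add: u1_def u2_def u3_def u4_def)
  then show ?thesis unfolding X Y Z W u1_def u2_def u3_def u4_def .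
qed



lemma sgn_trans: "0 < x*y \<Longrightarrow> 0 < y*z \<Longrightarrow> 0 < x*(z::real)"
proof -
  assume h: "0 < x*y" "0 < y*z"
  have "(x*z) * (y*y) = (x*y)*(y*z)" by (simp add: algebra_simps)
  also have "\<dots> > 0" using h by simp
  finally have "(x*z) * (y*y) > 0" .
  moreover have "y \<noteq> 0" using h by auto
  then have "y*y > 0" by (metis not_real_square_gt_zero)
  ultimately show ?thesis using sgn1 by blast
qed

lemma pos_by_sq: "X = Y * Z^2 \<Longrightarrow> (Y::real) > 0 \<Longrightarrow> Z \<noteq> 0 \<Longrightarrow> X > 0"
  by simp

lemma side_pos:
  fixes X1 X2 hP m h1 h2 t \<alpha> \<beta> :: real
  assumes "X1 = hP*((1-t)*m/h1 + t*0/h2)" "X2 = hP*((1-t)*0/h1 + t*m/h2)" "0<t" "t<1"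
    "hP \<noteq> 0" "m \<noteq> 0" "h1 \<noteq> 0" "h2 \<noteq> 0" "\<beta> \<noteq> 0" "\<alpha>*\<beta>/(h1*h2) > 0"
  shows "X2*\<alpha>/(X1*\<beta>) > 0"
proof -
  have "X2*\<alpha>/(X1*\<beta>) = (t/(1-t)) * (\<alpha>*\<beta>/(h1*h2)) * (h1/\<beta>)^2"
    using assms(3-9) unfolding assms(1,2) by (simp add: field_simps power2_eq_square)
  moreover have "t/(1-t) > 0" using assms by simp
  moreover have "(h1/\<beta>)^2 > 0" using assms by simp
  ultimately show ?thesis using assms(10) by (metis mult_pos_pos)
qed

lemma sum_nz: "0 < x*y \<Longrightarrow> x + (y::real) \<noteq> 0"
proof
  assume h: "0 < x*y" "x + y = 0"
  then have "y = -x" by simp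
  then have "x*y = -(x*x)" by simp
  moreover have "x*x \<ge> 0" by simp
  ultimately show False using h by linarith
qed


theorem mainTheorem2:
  fixes A B C D a b c d :: "real^3"
  assumes "generic_flags4 [(A, a), (B, b), (C, c), (D, d)]"
  shows "inscribed A B C D a b c d \<longleftrightarrow>
    (let X = triple_ratio A a B b C c;
         Y = triple_ratio A a C c D d;
         Z = pencil_cross_ratio A a (line_through A B) (line_through A C) (line_through A D);
         W = pencil_cross_ratio C c (line_through C D) (line_through C A) (line_through C B)
     in X > 0 \<and> Y > 0 \<and> Z > 0 \<and> W > 0)"
proof -
  have g1: "\<forall>i<4. is_flag (fst ([(A, a), (B, b), (C, c), (D, d)]!i)) (snd ([(A, a), (B, b), (C, c), (D, d)]!i))"
   and g2: "\<forall>i<4. \<forall>j<4. i \<noteq> j \<longrightarrow> snd ([(A, a), (B, b), (C, c), (D, d)]!j) \<bullet> fst ([(A, a), (B, b), (C, c), (D, d)]!i) \<noteq> 0"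
   and g3: "\<forall>i<4. \<forall>j<4. \<forall>k<4. i \<noteq> j \<and> j \<noteq> k \<and> i \<noteq> k \<longrightarrow>
        fst ([(A, a), (B, b), (C, c), (D, d)]!i) \<bullet> cross3 (fst ([(A, a), (B, b), (C, c), (D, d)]!j)) (fst ([(A, a), (B, b), (C, c), (D, d)]!k)) \<noteq> 0 \<and>
        snd ([(A, a), (B, b), (C, c), (D, d)]!i) \<bullet> cross3 (snd ([(A, a), (B, b), (C, c), (D, d)]!j)) (snd ([(A, a), (B, b), (C, c), (D, d)]!k)) \<noteq> 0"
    using assms unfolding generic_flags4_def by blast+
  have fA: "a \<bullet> A = 0" "A \<noteq> 0" using g1[rule_format, of 0] by (simp_all add: is_flag_def)
  have fB: "b \<bullet> B = 0" using g1[rule_format, of 1] by (simp_all add: is_flag_def)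
  have fC: "c \<bullet> C = 0" "C \<noteq> 0" using g1[rule_format, of 2] by (simp_all add: is_flag_def)
  have fD: "d \<bullet> D = 0" using g1[rule_format, of 3] by (simp_all add: is_flag_def)
  define A1 where "A1 = b \<bullet> A"
  define A2 where "A2 = d \<bullet> A"
  define B1 where "B1 = c \<bullet> B"
  define B2 where "B2 = a \<bullet> B"
  define C1 where "C1 = d \<bullet> C"
  define C2 where "C2 = b \<bullet> C"
  define D1 where "D1 = a \<bullet> D"
  define D2 where "D2 = c \<bullet> D"
  define cA where "cA = c \<bullet> A"
  define aC where "aC = a \<bullet> C"
  define tABC where "tABC = A \<bullet> cross3 B C"
  define tACD where "tACD = A \<bullet> cross3 C D"
  define p where "p = a \<bullet> cross3 b c"
  define q where "q = b \<bullet> cross3 c d"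
  define r where "r = a \<bullet> cross3 c d"
  define s where "s = a \<bullet> cross3 b d"
  have nzd: "A1 \<noteq> 0" "A2 \<noteq> 0" "B1 \<noteq> 0" "B2 \<noteq> 0" "C1 \<noteq> 0" "C2 \<noteq> 0" "D1 \<noteq> 0" "D2 \<noteq> 0" "cA \<noteq> 0" "aC \<noteq> 0"
    using g2[rule_format, of 0 1] g2[rule_format, of 0 3] g2[rule_format, of 1 2] g2[rule_format, of 1 0]
      g2[rule_format, of 2 3] g2[rule_format, of 2 1] g2[rule_format, of 3 0] g2[rule_format, of 3 2]
      g2[rule_format, of 0 2] g2[rule_format, of 2 0]
    unfolding A1_def A2_def B1_def B2_def C1_def C2_def D1_def D2_def cA_def aC_def by simp_all
  have nzt: "tABC \<noteq> 0" "tACD \<noteq> 0" "p \<noteq> 0" "q \<noteq> 0" "r \<noteq> 0" "s \<noteq> 0"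
    using g3[rule_format, of 0 1 2] g3[rule_format, of 0 2 3] g3[rule_format, of 1 2 3] g3[rule_format, of 0 1 3]
    unfolding tABC_def tACD_def p_def q_def r_def s_def by simp_all
  define V1 where "V1 = cross3 d a"
  define V2 where "V2 = cross3 a b"
  define V3 where "V3 = cross3 b c"
  define V4 where "V4 = cross3 c d"
  have LV: "a \<bullet> V1 = 0" "a \<bullet> V2 = 0" "a \<bullet> V3 = p" "a \<bullet> V4 = r"
     "b \<bullet> V1 = s" "b \<bullet> V2 = 0" "b \<bullet> V3 = 0" "b \<bullet> V4 = q"
     "c \<bullet> V1 = r" "c \<bullet> V2 = p" "c \<bullet> V3 = 0" "c \<bullet> V4 = 0"
     "d \<bullet> V1 = 0" "d \<bullet> V2 = s" "d \<bullet> V3 = q" "d \<bullet> V4 = 0"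
    unfolding V1_def V2_def V3_def V4_def p_def q_def r_def s_def cross3_def inner_vec_def sum_3 vector_def
    by (simp; algebra)+
  have T: "V1 \<bullet> cross3 V2 V3 = s * p" "V1 \<bullet> cross3 V2 V4 = s * r" "V1 \<bullet> cross3 V3 V4 = q * r"
    "V2 \<bullet> cross3 V3 V4 = p * q"
    unfolding V1_def V2_def V3_def V4_def p_def q_def r_def s_def
    by (rule tripV(1), rule tripV(2), rule tripV(3), rule tripV(4))
  have T2: "V2 \<bullet> cross3 V3 V1 = s * p" "V2 \<bullet> cross3 V4 V1 = s * r" "V3 \<bullet> cross3 V4 V1 = q * r"
    "V4 \<bullet> cross3 V1 V2 = s * r"
    using T cyc by metis+
  have dA: "s *\<^sub>R A = A1 *\<^sub>R V1 + A2 *\<^sub>R V2"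
    using expand3[of a b d A] fA unfolding s_def A1_def A2_def V1_def V2_def by simp
  have dB: "p *\<^sub>R B = B1 *\<^sub>R V2 + B2 *\<^sub>R V3"
  proof -
    have "b \<bullet> cross3 c a = p" unfolding p_def by (rule cyc(1)[symmetric])
    then show ?thesis using expand3[of b c a B] fB unfolding B1_def B2_def V2_def V3_def by simp
  qed
  have dC: "q *\<^sub>R C = C1 *\<^sub>R V3 + C2 *\<^sub>R V4"
  proof -
    have "c \<bullet> cross3 d b = q" unfolding q_def by (rule cyc(1)[symmetric])
    then show ?thesis using expand3[of c d b C] fC unfolding C1_def C2_def V3_def V4_def by simp
  qed
  have dD: "r *\<^sub>R D = D1 *\<^sub>R V4 + D2 *\<^sub>R V1"
  proof -
    have "d \<bullet> cross3 a c = r" unfolding r_def by (rule cyc(2)[symmetric])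
    then show ?thesis using expand3[of d a c D] fD unfolding D1_def D2_def V1_def V4_def by (simp add: algebra_simps)
  qed
  have e1: "s*cA = A1*r + A2*p"
    using arg_cong[OF dA, of "\<lambda>v. c \<bullet> v"] unfolding cA_def by (simp add: inner_add_right LV ac_simps)
  have e2: "q*aC = C1*p + C2*r"
    using arg_cong[OF dC, of "\<lambda>v. a \<bullet> v"] unfolding aC_def by (simp add: inner_add_right LV ac_simps)
  have e3: "s*p*q*tABC = A1*B1*C1* s*p + A1*B1*C2* s*r + A1*B2*C2*q*r + A2*B2*C2*p*q"
  proof -
    have "s*p*q*tABC = (s *\<^sub>R A) \<bullet> cross3 (p *\<^sub>R B) (q *\<^sub>R C)"
      unfolding tABC_def by (simp add: cross_mult_left cross_mult_right)
    also have "\<dots> = (A1 *\<^sub>R V1 + A2 *\<^sub>R V2) \<bullet> cross3 (B1 *\<^sub>R V2 + B2 *\<^sub>R V3) (C1 *\<^sub>R V3 + C2 *\<^sub>R V4)"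
      by (simp only: dA dB dC)
    also have "\<dots> = A1*B1*C1* s*p + A1*B1*C2* s*r + A1*B2*C2*q*r + A2*B2*C2*p*q"
      by (simp add: inner_add_left inner_add_right cross_add_left cross_add_right cross_mult_left cross_mult_right
          dot_cross_self T T2 algebra_simps)
    finally show ?thesis .
  qed
  have e4: "s*q*r*tACD = A1*C1*D1*q*r + A2*C1*D1*p*q + A2*C1*D2* s*p + A2*C2*D2* s*r"
  proof -
    have "s*q*r*tACD = (s *\<^sub>R A) \<bullet> cross3 (q *\<^sub>R C) (r *\<^sub>R D)"
      unfolding tACD_def by (simp add: cross_mult_left cross_mult_right)
    also have "\<dots> = (A1 *\<^sub>R V1 + A2 *\<^sub>R V2) \<bullet> cross3 (C1 *\<^sub>R V3 + C2 *\<^sub>R V4) (D1 *\<^sub>R V4 + D2 *\<^sub>R V1)"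
      by (simp only: dA dC dD)
    also have "\<dots> = A1*C1*D1*q*r + A2*C1*D1*p*q + A2*C1*D2* s*p + A2*C2*D2* s*r"
      by (simp add: inner_add_left inner_add_right cross_add_left cross_add_right cross_mult_left cross_mult_right
          dot_cross_self T T2 algebra_simps)
    finally show ?thesis .
  qed
  have AA: "A \<bullet> A \<noteq> 0" using fA by simp
  have CC: "C \<bullet> C \<noteq> 0" using fC by simp
  have X: "triple_ratio A a B b C c = B2*C2*cA/(aC*A1*B1)"
    unfolding triple_ratio_def B2_def C2_def cA_def aC_def A1_def B1_def by (simp add: ac_simps)
  have Y: "triple_ratio A a C c D d = aC*D2*A2/(D1*cA*C1)"
    unfolding triple_ratio_def aC_def D2_def A2_def D1_def cA_def C1_def by (simp add: ac_simps)
  have Z: "pencil_cross_ratio A a (line_through A B) (line_through A C) (line_through A D) = B2*tACD/(D1*tABC)"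
  proof -
    have "pencil_bracket A a (line_through A B) = (A \<bullet> A) * B2"
      unfolding pencil_bracket_def line_through_def B2_def by (simp add: crosscross inner_diff_right fA)
    moreover have "pencil_bracket A a (line_through A D) = (A \<bullet> A) * D1"
      unfolding pencil_bracket_def line_through_def D1_def by (simp add: crosscross inner_diff_right fA)
    moreover have "pencil_bracket A (line_through A C) (line_through A D) = (A \<bullet> A) * tACD"
      unfolding pencil_bracket_def line_through_def tACD_def by (simp add: crosscross2)
    moreover have "pencil_bracket A (line_through A B) (line_through A C) = (A \<bullet> A) * tABC"
      unfolding pencil_bracket_def line_through_def tABC_def by (simp add: crosscross2)
    ultimately show ?thesis unfolding pencil_cross_ratio_def using AA by simp
  qed
  have W: "pencil_cross_ratio C c (line_through C D) (line_through C A) (line_through C B) = D2*tABC/(B1*tACD)"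
  proof -
    have "pencil_bracket C c (line_through C D) = (C \<bullet> C) * D2"
      unfolding pencil_bracket_def line_through_def D2_def by (simp add: crosscross inner_diff_right fC)
    moreover have "pencil_bracket C c (line_through C B) = (C \<bullet> C) * B1"
      unfolding pencil_bracket_def line_through_def B1_def by (simp add: crosscross inner_diff_right fC)
    moreover have "pencil_bracket C (line_through C A) (line_through C B) = (C \<bullet> C) * tABC"
      unfolding pencil_bracket_def line_through_def tABC_def using cyc(2)[of A B C] by (simp add: crosscross2)
    moreover have "pencil_bracket C (line_through C D) (line_through C A) = (C \<bullet> C) * tACD"
      unfolding pencil_bracket_def line_through_def tACD_def using cyc(1)[of A C D] by (simp add: crosscross2)
    ultimately show ?thesis unfolding pencil_cross_ratio_def using CC by simp
  qed
  have RHS: "(let X = triple_ratio A a B b C c;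
         Y = triple_ratio A a C c D d;
         Z = pencil_cross_ratio A a (line_through A B) (line_through A C) (line_through A D);
         W = pencil_cross_ratio C c (line_through C D) (line_through C A) (line_through C B)
     in X > 0 \<and> Y > 0 \<and> Z > 0 \<and> W > 0) \<longleftrightarrow>
     (A2*p/(A1*r) > 0 \<and> B2*q/(B1* s) > 0 \<and> C2*r/(C1*p) > 0 \<and> D2* s/(D1*q) > 0)"
    unfolding Let_def X Y Z W
    by (rule core[OF nzd(1-8) nzt(3-6) nzd(9,10) nzt(1,2) e1 e2 e3 e4])
  have INS: "inscribed A B C D a b c d \<longleftrightarrow>
     (A2*p/(A1*r) > 0 \<and> B2*q/(B1* s) > 0 \<and> C2*r/(C1*p) > 0 \<and> D2* s/(D1*q) > 0)"
  proof
    assume "inscribed A B C D a b c d"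
    then obtain h where H: "h \<noteq> 0" "V1 \<noteq> 0" "V2 \<noteq> 0" "V3 \<noteq> 0" "V4 \<noteq> 0"
      "h \<bullet> V1 \<noteq> 0" "h \<bullet> V2 \<noteq> 0" "h \<bullet> V3 \<noteq> 0" "h \<bullet> V4 \<noteq> 0"
      "h \<bullet> A \<noteq> 0" "h \<bullet> B \<noteq> 0" "h \<bullet> C \<noteq> 0" "h \<bullet> D \<noteq> 0"
      "convex_quadrilateral (chart_pt h V1) (chart_pt h V2) (chart_pt h V3) (chart_pt h V4)"
      "chart_pt h A \<in> open_segment (chart_pt h V1) (chart_pt h V2)"
      "chart_pt h B \<in> open_segment (chart_pt h V2) (chart_pt h V3)"
      "chart_pt h C \<in> open_segment (chart_pt h V3) (chart_pt h V4)"
      "chart_pt h D \<in> open_segment (chart_pt h V4) (chart_pt h V1)"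
      unfolding inscribed_def Let_def meet_def V1_def[symmetric] V2_def[symmetric] V3_def[symmetric] V4_def[symmetric]
      by blast
    define h1 where "h1 = h \<bullet> V1"
    define h2 where "h2 = h \<bullet> V2"
    define h3 where "h3 = h \<bullet> V3"
    define h4 where "h4 = h \<bullet> V4"
    have hn: "h1 \<noteq> 0" "h2 \<noteq> 0" "h3 \<noteq> 0" "h4 \<noteq> 0" using H unfolding h1_def h2_def h3_def h4_def by simp_all
    define w1 where "w1 = chart_pt h V1"
    define w2 where "w2 = chart_pt h V2"
    define w3 where "w3 = chart_pt h V3"
    define w4 where "w4 = chart_pt h V4"
    have D123: "w1 \<bullet> cross3 w2 w3 = s*p/(h1*h2*h3)"
      unfolding w1_def w2_def w3_def chart_pt_def h1_def h2_def h3_def by (simp add: cross_mult_left cross_mult_right T)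
    have D234: "w2 \<bullet> cross3 w3 w4 = p*q/(h2*h3*h4)"
      unfolding w4_def w2_def w3_def chart_pt_def h4_def h2_def h3_def by (simp add: cross_mult_left cross_mult_right T)
    have D341: "w3 \<bullet> cross3 w4 w1 = q*r/(h3*h4*h1)"
      unfolding w4_def w1_def w3_def chart_pt_def h4_def h1_def h3_def by (simp add: cross_mult_left cross_mult_right T2)
    have D412: "w4 \<bullet> cross3 w1 w2 = s*r/(h4*h1*h2)"
      unfolding w4_def w1_def w2_def chart_pt_def h4_def h1_def h2_def by (simp add: cross_mult_left cross_mult_right T2)
    have cv: "open_segment w1 w3 \<inter> open_segment w2 w4 \<noteq> {}"
      using H(14) unfolding convex_quadrilateral_def w1_def w2_def w3_def w4_def by blast
    have D123nz: "w1 \<bullet> cross3 w2 w3 \<noteq> 0" unfolding D123 using hn nzt by simp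
    note CF = convex_fwd[OF cv D123nz]
    have Q1: "(w2 \<bullet> cross3 w3 w4) * (w1 \<bullet> cross3 w2 w3) > 0"
      by (rule sgn_trans[OF CF(2)]) (use CF(1) in \<open>simp add: mult.commute\<close>)
    have Q2: "(w3 \<bullet> cross3 w4 w1) * (w4 \<bullet> cross3 w1 w2) > 0"
      by (rule sgn_trans[of _ "w1 \<bullet> cross3 w2 w3"]) (use CF(1,3) in \<open>simp_all add: mult.commute\<close>)
    have Q3: "(w2 \<bullet> cross3 w3 w4) * (w3 \<bullet> cross3 w4 w1) > 0"
      by (rule sgn_trans[OF Q1 CF(3)])
    have Q4: "(w4 \<bullet> cross3 w1 w2) * (w1 \<bullet> cross3 w2 w3) > 0"
      using CF(1) by (simp add: mult.commute)
    have PA: "p*r/(h1*h2) > 0"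
      by (rule pos_by_sq[OF _ Q3, of _ "h3*h4/q"]) (use hn nzt in \<open>simp_all add: D234 D341 field_simps power2_eq_square\<close>)
    have PB: "q* s/(h2*h3) > 0"
      by (rule pos_by_sq[OF _ Q2, of _ "h4*h1/r"]) (use hn nzt in \<open>simp_all add: D341 D412 field_simps power2_eq_square\<close>)
    have PC: "r*p/(h3*h4) > 0"
      by (rule pos_by_sq[OF _ Q4, of _ "h1*h2/s"]) (use hn nzt in \<open>simp_all add: D412 D123 field_simps power2_eq_square\<close>)
    have PD: "s*q/(h4*h1) > 0"
      by (rule pos_by_sq[OF _ Q1[unfolded mult.commute[of "w2 \<bullet> cross3 w3 w4"]], of _ "h2*h3/p"]) (use hn nzt in \<open>simp_all add: D123 D234 field_simps power2_eq_square\<close>)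
    obtain tA where tA: "0 < tA" "tA < 1" "\<forall>l. l \<bullet> A = (h \<bullet> A) * ((1-tA)*(l \<bullet> V1)/(h \<bullet> V1) + tA*(l \<bullet> V2)/(h \<bullet> V2))"
      using seg_fwd[OF H(6,7,10,15)] by blast
    obtain tB where tB: "0 < tB" "tB < 1" "\<forall>l. l \<bullet> B = (h \<bullet> B) * ((1-tB)*(l \<bullet> V2)/(h \<bullet> V2) + tB*(l \<bullet> V3)/(h \<bullet> V3))"
      using seg_fwd[OF H(7,8,11,16)] by blast
    obtain tC where tC: "0 < tC" "tC < 1" "\<forall>l. l \<bullet> C = (h \<bullet> C) * ((1-tC)*(l \<bullet> V3)/(h \<bullet> V3) + tC*(l \<bullet> V4)/(h \<bullet> V4))"
      using seg_fwd[OF H(8,9,12,17)] by blast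
    obtain tD where tD: "0 < tD" "tD < 1" "\<forall>l. l \<bullet> D = (h \<bullet> D) * ((1-tD)*(l \<bullet> V4)/(h \<bullet> V4) + tD*(l \<bullet> V1)/(h \<bullet> V1))"
      using seg_fwd[OF H(9,6,13,18)] by blast
    have "A2*p/(A1*r) > 0"
      by (rule side_pos[OF _ _ tA(1,2) H(10) nzt(6) hn(1,2) nzt(5) PA])
         (use tA(3)[rule_format, of b] tA(3)[rule_format, of d] in \<open>simp_all add: A1_def A2_def LV h1_def h2_def\<close>)
    moreover have "B2*q/(B1* s) > 0"
      by (rule side_pos[OF _ _ tB(1,2) H(11) nzt(3) hn(2,3) nzt(6) PB])
         (use tB(3)[rule_format, of c] tB(3)[rule_format, of a] in \<open>simp_all add: B1_def B2_def LV h2_def h3_def\<close>)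
    moreover have "C2*r/(C1*p) > 0"
      by (rule side_pos[OF _ _ tC(1,2) H(12) nzt(4) hn(3,4) nzt(3) PC])
         (use tC(3)[rule_format, of d] tC(3)[rule_format, of b] in \<open>simp_all add: C1_def C2_def LV h3_def h4_def\<close>)
    moreover have "D2* s/(D1*q) > 0"
      by (rule side_pos[OF _ _ tD(1,2) H(13) nzt(5) hn(4,1) nzt(4) PD])
         (use tD(3)[rule_format, of a] tD(3)[rule_format, of c] in \<open>simp_all add: D1_def D2_def LV h4_def h1_def\<close>)
    ultimately show "A2*p/(A1*r) > 0 \<and> B2*q/(B1* s) > 0 \<and> C2*r/(C1*p) > 0 \<and> D2* s/(D1*q) > 0" by blast
  next
    assume "A2*p/(A1*r) > 0 \<and> B2*q/(B1* s) > 0 \<and> C2*r/(C1*p) > 0 \<and> D2* s/(D1*q) > 0"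
    then have S: "(A2*p)*(A1*r) > 0" "(B2*q)*(B1 * s) > 0" "(C2*r)*(C1*p) > 0" "(D2 * s)*(D1*q) > 0"
      using pos_div_iff nzd nzt by (metis mult_eq_0_iff)+
    define h where "h = (q * s) *\<^sub>R a + c"
    have hV: "h \<bullet> V1 = r" "h \<bullet> V2 = p" "h \<bullet> V3 = q * s * p" "h \<bullet> V4 = q * s * r"
      unfolding h_def by (simp_all add: inner_add_left LV)
    have hnz: "h \<noteq> 0" using hV(1) nzt by auto
    have Vnz: "V1 \<noteq> 0" "V2 \<noteq> 0" "V3 \<noteq> 0" "V4 \<noteq> 0"
      using T(1,4) nzt by auto
    have prA: "(A1 * (h \<bullet> V1)) * (A2 * (h \<bullet> V2)) > 0"
      using S(1) unfolding hV by (simp add: ac_simps)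
    have prB: "(B1 * (h \<bullet> V2)) * (B2 * (h \<bullet> V3)) > 0"
    proof -
      have "(B1 * (h \<bullet> V2)) * (B2 * (h \<bullet> V3)) = ((B2*q)*(B1 * s)) * p^2"
        unfolding hV by (simp add: power2_eq_square ac_simps)
      then show ?thesis by (simp only:) (rule mult_pos_pos[OF S(2)], simp add: nzt)
    qed
    have prC: "(C1 * (h \<bullet> V3)) * (C2 * (h \<bullet> V4)) > 0"
    proof -
      have "(C1 * (h \<bullet> V3)) * (C2 * (h \<bullet> V4)) = ((C2*r)*(C1*p)) * (q * s)^2"
        unfolding hV by (simp add: power2_eq_square ac_simps)
      then show ?thesis by (simp only:) (rule mult_pos_pos[OF S(3)], simp add: nzt)
    qed
    have prD: "(D1 * (h \<bullet> V4)) * (D2 * (h \<bullet> V1)) > 0"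
    proof -
      have "(D1 * (h \<bullet> V4)) * (D2 * (h \<bullet> V1)) = ((D2 * s)*(D1*q)) * r^2"
        unfolding hV by (simp add: power2_eq_square ac_simps)
      then show ?thesis by (simp only:) (rule mult_pos_pos[OF S(4)], simp add: nzt)
    qed
    have hA: "s * (h \<bullet> A) = A1 * (h \<bullet> V1) + A2 * (h \<bullet> V2)"
      using arg_cong[OF dA, of "\<lambda>v. h \<bullet> v"] by (simp add: inner_add_right)
    have hB: "p * (h \<bullet> B) = B1 * (h \<bullet> V2) + B2 * (h \<bullet> V3)"
      using arg_cong[OF dB, of "\<lambda>v. h \<bullet> v"] by (simp add: inner_add_right)
    have hC: "q * (h \<bullet> C) = C1 * (h \<bullet> V3) + C2 * (h \<bullet> V4)"
      using arg_cong[OF dC, of "\<lambda>v. h \<bullet> v"] by (simp add: inner_add_right)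
    have hD: "r * (h \<bullet> D) = D1 * (h \<bullet> V4) + D2 * (h \<bullet> V1)"
      using arg_cong[OF dD, of "\<lambda>v. h \<bullet> v"] by (simp add: inner_add_right)
    have hP: "h \<bullet> A \<noteq> 0" "h \<bullet> B \<noteq> 0" "h \<bullet> C \<noteq> 0" "h \<bullet> D \<noteq> 0"
      using sum_nz[OF prA] sum_nz[OF prB] sum_nz[OF prC] sum_nz[OF prD] hA hB hC hD by auto
    have hVnz: "h \<bullet> V1 \<noteq> 0" "h \<bullet> V2 \<noteq> 0" "h \<bullet> V3 \<noteq> 0" "h \<bullet> V4 \<noteq> 0"
      unfolding hV using nzt by simp_all
    define w1 where "w1 = chart_pt h V1"
    define w2 where "w2 = chart_pt h V2"
    define w3 where "w3 = chart_pt h V3"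
    define w4 where "w4 = chart_pt h V4"
    have hw: "h \<bullet> w1 = 1" "h \<bullet> w2 = 1" "h \<bullet> w3 = 1" "h \<bullet> w4 = 1"
      unfolding w1_def w2_def w3_def w4_def chart_pt_def using hVnz by simp_all
    have D123: "w1 \<bullet> cross3 w2 w3 = s*p/(r*p*(q * s * p))"
      unfolding w1_def w2_def w3_def chart_pt_def hV by (simp add: cross_mult_left cross_mult_right T hV)
    have D234: "w2 \<bullet> cross3 w3 w4 = p*q/(p*(q * s * p)*(q * s * r))"
      unfolding w4_def w2_def w3_def chart_pt_def by (simp add: cross_mult_left cross_mult_right T hV)
    have D341: "w3 \<bullet> cross3 w4 w1 = q*r/((q * s * p)*(q * s * r)*r)"
      unfolding w4_def w1_def w3_def chart_pt_def by (simp add: cross_mult_left cross_mult_right T2 hV)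
    have D412: "w4 \<bullet> cross3 w1 w2 = s*r/((q * s * r)*r*p)"
      unfolding w4_def w1_def w2_def chart_pt_def by (simp add: cross_mult_left cross_mult_right T2 hV)
    have kp: "p*q*r \<noteq> 0" using nzt by simp
    have K: "(w1 \<bullet> cross3 w2 w3) * (p*q*r) > 0" "(w2 \<bullet> cross3 w3 w4) * (p*q*r) > 0"
       "(w3 \<bullet> cross3 w4 w1) * (p*q*r) > 0" "(w4 \<bullet> cross3 w1 w2) * (p*q*r) > 0"
    proof -
      have "(w1 \<bullet> cross3 w2 w3) * (p*q*r) = 1" unfolding D123 using nzt by (simp add: field_simps)
      then show "(w1 \<bullet> cross3 w2 w3) * (p*q*r) > 0" by simp
      have "(w2 \<bullet> cross3 w3 w4) * (p*q*r) = 1/s^2" unfolding D234 using nzt by (simp add: field_simps power2_eq_square)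
      then show "(w2 \<bullet> cross3 w3 w4) * (p*q*r) > 0" using nzt by simp
      have "(w3 \<bullet> cross3 w4 w1) * (p*q*r) = 1/s^2" unfolding D341 using nzt by (simp add: field_simps power2_eq_square)
      then show "(w3 \<bullet> cross3 w4 w1) * (p*q*r) > 0" using nzt by simp
      have "(w4 \<bullet> cross3 w1 w2) * (p*q*r) = 1" unfolding D412 using nzt by (simp add: field_simps)
      then show "(w4 \<bullet> cross3 w1 w2) * (p*q*r) > 0" by simp
    qed
    have conv: "convex_quadrilateral w1 w2 w3 w4"
      by (rule convex_bwd[OF hw kp K])
    have ne: "w1 \<noteq> w2" "w2 \<noteq> w3" "w3 \<noteq> w4" "w4 \<noteq> w1"
    proof -
      show "w1 \<noteq> w2" proof assume "w1 = w2" then show False using K(1) by (simp add: dot_cross_self) qed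
      show "w2 \<noteq> w3" proof assume "w2 = w3" then show False using K(1) by simp qed
      show "w3 \<noteq> w4" proof assume "w3 = w4" then show False using K(2) by simp qed
      show "w4 \<noteq> w1" proof assume "w4 = w1" then show False using K(4) by (simp add: dot_cross_self) qed
    qed
    have sA: "chart_pt h A \<in> open_segment w1 w2"
      unfolding w1_def w2_def by (rule seg_bwd[OF dA nzt(6) hVnz(1,2) hP(1) prA ne(1)[unfolded w1_def w2_def]])
    have sB: "chart_pt h B \<in> open_segment w2 w3"
      unfolding w3_def w2_def by (rule seg_bwd[OF dB nzt(3) hVnz(2,3) hP(2) prB ne(2)[unfolded w3_def w2_def]])
    have sC: "chart_pt h C \<in> open_segment w3 w4"
      unfolding w3_def w4_def by (rule seg_bwd[OF dC nzt(4) hVnz(3,4) hP(3) prC ne(3)[unfolded w3_def w4_def]])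
    have sD: "chart_pt h D \<in> open_segment w4 w1"
      unfolding w1_def w4_def by (rule seg_bwd[OF dD nzt(5) hVnz(4,1) hP(4) prD ne(4)[unfolded w1_def w4_def]])
    show "inscribed A B C D a b c d"
      unfolding inscribed_def Let_def meet_def V1_def[symmetric] V2_def[symmetric] V3_def[symmetric] V4_def[symmetric]
      apply (rule exI[of _ h])
      using hnz Vnz hVnz hP conv sA sB sC sD unfolding w1_def w2_def w3_def w4_def by blast
  qed
  show ?thesis using INS RHS by simp
qed


end
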